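(* Let $P$ be an irreducible positive recurrent stochastic kernel on a countable set $I$ with stationary distribution $\pi$, let $\widetilde{P}$ be a stochastic kernel on a countable set $\widetilde{I}$ and $\Lambda=(\Lambda(\widetilde{x},x):\widetilde{x}\in\widetilde{I},x\in I)$ a stochastic matrix with $\widetilde{P}\Lambda=\Lambda P$. Define the kernel $\underline{P}$ on $I\times\widetilde{I}$ by $$\underline{P}\big((x,\widetilde{x}),(y,\widetilde{y})\big)=\frac{P(x,y)\,\widetilde{P}(\widetilde{x},\widetilde{y})\,\Lambda(\widetilde{y},y)}{(\Lambda P)(\widetilde{x},y)}\,\mathbf{1}\big((\Lambda P)(\widetilde{x},y)>0\big),$$ and let $(X,\widetilde{X})$ be the Markov chain with kernel $\underline{P}$. Fix $\widetilde{\partial}\in\widetilde{I}$. Assume $\widetilde{\mu}$ is a quasi-stationary distribution for the chain $\widetilde{X}$ (with kernel $\widetilde{P}$) with forbidden state $\widetilde{\partial}$. Then the probability measure $$\underline{\mu}(x_0,\widetilde{x}_0)=\widetilde{\mu}(\widetilde{x}_0)\,\Lambda(\widetilde{x}_0,x_0),\qquad (x_0,\widetilde{x}_0)\in I\times(\widetilde{I}\setminus\{\widetilde{\partial}\}),$$ is a quasi-stationary distribution for $(X,\widetilde{X})$ with forbidden set $\underline{\partial}=I\times\{\widetilde{\partial}\}$.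
   Context: For a Markov chain $Y=(Y_n)_{n\ge0}$ on a countable set $J$ with stochastic kernel $Q$ and a nonempty proper subset $K\subset J$ with hitting time $\tau_K=\inf\{n\ge0:Y_n\in K\}$, a probability measure $\mu$ on $J\setminus K$ is a quasi-stationary distribution (q.s.d.) for $Y$ with forbidden set $K$ if $\mathbb{P}_\mu(Y_n=j\mid\tau_K>n)=\mu(j)$ for all $j\in J\setminus K$ and all $n\ge0$; equivalently, there is $\gamma$ with $\sum_{i\in J\setminus K}\mu(i)Q(i,j)=\gamma\mu(j)$ for all $j\in J\setminus K$. $\mathbb{P}_\mu$ is the law of the chain with initial distribution $\mu$. *)

theory Defs
  imports "HOL-Analysis.Analysis"
begin

definition stochastic :: "('a \<Rightarrow> 'b \<Rightarrow> real) \<Rightarrow> bool" where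
  "stochastic Q \<longleftrightarrow> (\<forall>x y. 0 \<le> Q x y) \<and> (\<forall>x. (Q x has_sum 1) UNIV)"

definition mat_mult :: "('a \<Rightarrow> 'b \<Rightarrow> real) \<Rightarrow> ('b \<Rightarrow> 'c \<Rightarrow> real) \<Rightarrow> 'a \<Rightarrow> 'c \<Rightarrow> real" where
  "mat_mult A B x z = (\<Sum>\<^sub>\<infinity>y. A x y * B y z)"

fun mat_pow :: "('a \<Rightarrow> 'a \<Rightarrow> real) \<Rightarrow> nat \<Rightarrow> 'a \<Rightarrow> 'a \<Rightarrow> real" where
  "mat_pow Q 0 = (\<lambda>x y. if x = y then 1 else 0)"
| "mat_pow Q (Suc n) = mat_mult (mat_pow Q n) Q"

definition irreducible_kernel :: "('a \<Rightarrow> 'a \<Rightarrow> real) \<Rightarrow> bool" where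
  "irreducible_kernel Q \<longleftrightarrow> (\<forall>x y. \<exists>n. mat_pow Q n x y > 0)"

text \<open>First passage probabilities: first_passage Q n x y = P_x(first hitting time of y
  at a time >= 1 equals n).\<close>
fun first_passage :: "('a \<Rightarrow> 'a \<Rightarrow> real) \<Rightarrow> nat \<Rightarrow> 'a \<Rightarrow> 'a \<Rightarrow> real" where
  "first_passage Q 0 x y = 0"
| "first_passage Q (Suc 0) x y = Q x y"
| "first_passage Q (Suc (Suc n)) x y =
     (\<Sum>\<^sub>\<infinity>z\<in>-{y}. Q x z * first_passage Q (Suc n) z y)"

definition positive_recurrent :: "('a \<Rightarrow> 'a \<Rightarrow> real) \<Rightarrow> bool" where
  "positive_recurrent Q \<longleftrightarrow>
     (\<forall>x. (\<lambda>n. first_passage Q n x x) sums 1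
        \<and> summable (\<lambda>n. real n * first_passage Q n x x))"

definition stationary_distribution :: "('a \<Rightarrow> 'a \<Rightarrow> real) \<Rightarrow> ('a \<Rightarrow> real) \<Rightarrow> bool" where
  "stationary_distribution Q \<pi> \<longleftrightarrow>
     (\<forall>x. 0 \<le> \<pi> x) \<and> (\<pi> has_sum 1) UNIV \<and> (\<forall>y. (\<Sum>\<^sub>\<infinity>x. \<pi> x * Q x y) = \<pi> y)"

text \<open>Quasi-stationary distribution (eigenvector form, as in the context):
  mu is a probability measure on J - K and mu Q = gamma mu on J - K.\<close>
definition qsd :: "('a \<Rightarrow> 'a \<Rightarrow> real) \<Rightarrow> 'a set \<Rightarrow> ('a \<Rightarrow> real) \<Rightarrow> bool" where
  "qsd Q K \<mu> \<longleftrightarrow>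
     (\<forall>j. 0 \<le> \<mu> j) \<and> (\<forall>j\<in>K. \<mu> j = 0) \<and> (\<mu> has_sum 1) (- K) \<and>
     (\<exists>\<gamma>. \<forall>j\<in>-K. (\<Sum>\<^sub>\<infinity>i\<in>-K. \<mu> i * Q i j) = \<gamma> * \<mu> j)"

definition coupled_kernel ::
  "('i \<Rightarrow> 'i \<Rightarrow> real) \<Rightarrow> ('j \<Rightarrow> 'j \<Rightarrow> real) \<Rightarrow> ('j \<Rightarrow> 'i \<Rightarrow> real)
     \<Rightarrow> ('i \<times> 'j) \<Rightarrow> ('i \<times> 'j) \<Rightarrow> real" where
  "coupled_kernel P Pt \<Lambda> = (\<lambda>(x, xt) (y, yt).
     if mat_mult \<Lambda> P xt y > 0
     then P x y * Pt xt yt * \<Lambda> yt y / mat_mult \<Lambda> P xt y else 0)"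

end

theory Submission
  imports Defs
begin

lemma sigma_swap_nonneg:
  fixes h :: "'a \<times> 'b \<Rightarrow> real"
  assumes nn: "\<And>a b. a \<in> A \<Longrightarrow> 0 \<le> h (a, b)"
    and inner: "\<And>a. a \<in> A \<Longrightarrow> ((\<lambda>b. h (a, b)) has_sum g a) UNIV"
    and outer: "(g has_sum S) A"
  shows "((\<lambda>(b, a). h (a, b)) has_sum S) (UNIV \<times> A)"
proof -
  have sm: "h summable_on Sigma A (\<lambda>_. UNIV)"
    by (rule summable_on_SigmaI[OF inner]) (use outer nn in \<open>auto simp: summable_on_def\<close>)
  have "(h has_sum S) (A \<times> UNIV)"
    by (rule has_sum_SigmaI[OF inner outer sm])
  then show ?thesis by (rule has_sum_swap[THEN iffD1])
qed

lemma entry_le_one: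
  fixes f :: "'a \<Rightarrow> real"
  assumes "\<And>x. 0 \<le> f x" "(f has_sum s) UNIV"
  shows "f y \<le> s"
proof -
  have "infsum f {y} \<le> infsum f UNIV"
  proof (rule infsum_mono_neutral)
    show "f summable_on {y}" by (rule summable_on_finite) simp
    show "f summable_on UNIV" using assms(2) by (auto simp: summable_on_def)
  qed (use assms in auto)
  moreover have "infsum f {y} = f y" by simp
  moreover have "infsum f UNIV = s" by (rule infsumI[OF assms(2)])
  ultimately show ?thesis by linarith
qed

lemma summable_mult_bounded:
  fixes a b :: "'a \<Rightarrow> real"
  assumes "\<And>x. 0 \<le> a x" "\<And>x. 0 \<le> b x" "\<And>x. b x \<le> 1" "a summable_on A"
  shows "(\<lambda>x. a x * b x) summable_on A"
  by (rule summable_on_comparison_test[OF assms(4)])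
     (use assms in \<open>auto intro: mult_left_le mult_nonneg_nonneg\<close>)

theorem proposition7:
  fixes P :: "'i::countable \<Rightarrow> 'i \<Rightarrow> real"
    and \<pi> :: "'i \<Rightarrow> real"
    and Pt :: "'j::countable \<Rightarrow> 'j \<Rightarrow> real"
    and \<Lambda> :: "'j \<Rightarrow> 'i \<Rightarrow> real"
    and dt :: 'j
    and \<mu>t :: "'j \<Rightarrow> real"
  assumes "stochastic P" and "irreducible_kernel P" and "positive_recurrent P"
    and "stationary_distribution P \<pi>"
    and "stochastic Pt"
    and "stochastic \<Lambda>"
    and "mat_mult Pt \<Lambda> = mat_mult \<Lambda> P"
    and "UNIV \<noteq> {dt}"
    and "qsd Pt {dt} \<mu>t"
  shows "qsd (coupled_kernel P Pt \<Lambda>) (UNIV \<times> {dt}) (\<lambda>(x0, xt0). \<mu>t xt0 * \<Lambda> xt0 x0)"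
proof -
  have Pn: "\<And>x y. 0 \<le> P x y" and Ps: "\<And>x. (P x has_sum 1) UNIV"
    using assms(1) by (auto simp: stochastic_def)
  have Ptn: "\<And>x y. 0 \<le> Pt x y" and Pts: "\<And>x. (Pt x has_sum 1) UNIV"
    using assms(5) by (auto simp: stochastic_def)
  have Ln: "\<And>x y. 0 \<le> \<Lambda> x y" and Ls: "\<And>x. (\<Lambda> x has_sum 1) UNIV"
    using assms(6) by (auto simp: stochastic_def)
  have P1: "\<And>x y. P x y \<le> 1" using entry_le_one[OF Pn Ps] .
  have Pt1: "\<And>x y. Pt x y \<le> 1" using entry_le_one[OF Ptn Pts] .
  have L1: "\<And>x y. \<Lambda> x y \<le> 1" using entry_le_one[OF Ln Ls] .
  from assms(9) have mun: "\<And>j. 0 \<le> \<mu>t j" and mud: "\<mu>t dt = 0"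
    and mus: "(\<mu>t has_sum 1) (- {dt})"
    and "\<exists>\<gamma>. \<forall>j\<in>-{dt}. (\<Sum>\<^sub>\<infinity>i\<in>-{dt}. \<mu>t i * Pt i j) = \<gamma> * \<mu>t j"
    by (auto simp: qsd_def)
  then obtain \<gamma> where gam: "\<And>j. j \<noteq> dt \<Longrightarrow> (\<Sum>\<^sub>\<infinity>i\<in>-{dt}. \<mu>t i * Pt i j) = \<gamma> * \<mu>t j"
    by auto
  have compl: "- (UNIV \<times> {dt}) = (UNIV :: 'i set) \<times> (- {dt})" by auto
  define \<mu> where "\<mu> = (\<lambda>(x0, xt0). \<mu>t xt0 * \<Lambda> xt0 x0)"
  have LPsum: "((\<lambda>x. \<Lambda> xt x * P x y) has_sum mat_mult \<Lambda> P xt y) UNIV" for xt y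
  proof -
    have "(\<lambda>x. \<Lambda> xt x * P x y) summable_on UNIV"
    proof (rule summable_mult_bounded[of "\<Lambda> xt" "\<lambda>x. P x y"])
      show "\<Lambda> xt summable_on UNIV" using Ls[of xt] unfolding summable_on_def by blast
    qed (use Ln Pn P1 in auto)
    then show ?thesis by (simp add: mat_mult_def)
  qed
  have PtLsum: "((\<lambda>z. Pt xt z * \<Lambda> z y) has_sum mat_mult Pt \<Lambda> xt y) UNIV" for xt y
  proof -
    have "(\<lambda>z. Pt xt z * \<Lambda> z y) summable_on UNIV"
    proof (rule summable_mult_bounded[of "Pt xt" "\<lambda>z. \<Lambda> z y"])
      show "Pt xt summable_on UNIV" using Pts[of xt] unfolding summable_on_def by blast
    qed (use Ln Ptn L1 in auto)
    then show ?thesis by (simp add: mat_mult_def)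
  qed
  have LPn: "0 \<le> mat_mult \<Lambda> P xt y" for xt y
    using LPsum[of xt y] by (rule has_sum_nonneg) (use Ln Pn in auto)
  have le: "Pt xt yt * \<Lambda> yt y \<le> mat_mult \<Lambda> P xt y" for xt yt y
  proof -
    have "Pt xt yt * \<Lambda> yt y \<le> mat_mult Pt \<Lambda> xt y"
      by (rule entry_le_one[of "\<lambda>z. Pt xt z * \<Lambda> z y", OF _ PtLsum[of xt y]])
         (simp add: Ptn Ln)
    then show ?thesis using assms(7) by simp
  qed
  have part3: "(\<mu> has_sum 1) (- (UNIV \<times> {dt}))"
  proof -
    have "((\<lambda>(b, a). \<mu>t a * \<Lambda> a b) has_sum 1) (UNIV \<times> (- {dt}))"
    proof -
      have a: "\<And>a b. a \<in> - {dt} \<Longrightarrow> 0 \<le> (\<lambda>(a, b). \<mu>t a * \<Lambda> a b) (a, b)"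
        using mun Ln by simp
      have b: "\<And>a. a \<in> - {dt} \<Longrightarrow> ((\<lambda>b. (\<lambda>(a, b). \<mu>t a * \<Lambda> a b) (a, b)) has_sum \<mu>t a) UNIV"
      proof -
        fix a
        have "((\<lambda>b. \<mu>t a * \<Lambda> a b) has_sum \<mu>t a * 1) UNIV"
          by (rule has_sum_cmult_right[OF Ls])
        then show "((\<lambda>b. (\<lambda>(a, b). \<mu>t a * \<Lambda> a b) (a, b)) has_sum \<mu>t a) UNIV" by simp
      qed
      have "((\<lambda>(b, a). (\<lambda>(a, b). \<mu>t a * \<Lambda> a b) (a, b)) has_sum 1) (UNIV \<times> (- {dt}))"
        by (rule sigma_swap_nonneg[OF a b mus])
      then show ?thesis by simp
    qed
    then show ?thesis unfolding compl \<mu>_def .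
  qed
  have part4: "(\<Sum>\<^sub>\<infinity>i\<in>-(UNIV \<times> {dt}). \<mu> i * coupled_kernel P Pt \<Lambda> i (y, yt)) = \<gamma> * \<mu> (y, yt)"
    if "yt \<noteq> dt" for y yt
  proof -
    define h where "h = (\<lambda>(xt, x). \<mu>t xt * \<Lambda> xt x * coupled_kernel P Pt \<Lambda> (x, xt) (y, yt))"
    define g where "g = (\<lambda>xt. (\<mu>t xt * Pt xt yt) * \<Lambda> yt y)"
    have inner: "((\<lambda>x. h (xt, x)) has_sum g xt) UNIV" for xt
    proof (cases "mat_mult \<Lambda> P xt y > 0")
      case True
      have "((\<lambda>x. (\<mu>t xt * Pt xt yt * \<Lambda> yt y / mat_mult \<Lambda> P xt y) * (\<Lambda> xt x * P x y))
              has_sum (\<mu>t xt * Pt xt yt * \<Lambda> yt y / mat_mult \<Lambda> P xt y) * mat_mult \<Lambda> P xt y) UNIV"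
        by (rule has_sum_cmult_right[OF LPsum])
      moreover have "(\<mu>t xt * Pt xt yt * \<Lambda> yt y / mat_mult \<Lambda> P xt y) * mat_mult \<Lambda> P xt y = g xt"
        using True by (simp add: g_def)
      moreover have "(\<lambda>x. (\<mu>t xt * Pt xt yt * \<Lambda> yt y / mat_mult \<Lambda> P xt y) * (\<Lambda> xt x * P x y))
          = (\<lambda>x. h (xt, x))"
        using True by (auto simp: h_def coupled_kernel_def field_simps)
      ultimately show ?thesis by simp
    next
      case False
      then have "mat_mult \<Lambda> P xt y = 0" using LPn[of xt y] by simp
      then have "Pt xt yt * \<Lambda> yt y = 0" using le[of xt yt y] Ptn Ln
        by (metis antisym mult_nonneg_nonneg)
      then have "g xt = 0" by (simp add: g_def)
      moreover have "(\<lambda>x. h (xt, x)) = (\<lambda>_. 0)"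
        using False by (auto simp: h_def coupled_kernel_def)
      ultimately show ?thesis by simp
    qed
    have outer: "(g has_sum \<gamma> * \<mu>t yt * \<Lambda> yt y) (- {dt})"
    proof -
      have sm: "(\<lambda>xt. \<mu>t xt * Pt xt yt) summable_on (- {dt})"
      proof (rule summable_mult_bounded[of "\<mu>t" "\<lambda>xt. Pt xt yt"])
        show "\<mu>t summable_on (- {dt})" using mus unfolding summable_on_def by blast
      qed (use mun Ptn Pt1 in auto)
      have "((\<lambda>xt. \<mu>t xt * Pt xt yt) has_sum \<gamma> * \<mu>t yt) (- {dt})"
        using sm gam[OF that] by (metis has_sum_infsum)
      from has_sum_cmult_left[OF this, of "\<Lambda> yt y"] show ?thesis
        by (simp add: g_def)
    qed
    have nn: "0 \<le> h (xt, x)" for xt x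
      using mun Ln Pn Ptn LPn
      by (auto simp: h_def coupled_kernel_def intro!: mult_nonneg_nonneg divide_nonneg_nonneg)
    have A: "((\<lambda>(b, a). h (a, b)) has_sum \<gamma> * \<mu>t yt * \<Lambda> yt y) (UNIV \<times> (- {dt}))"
      by (rule sigma_swap_nonneg[OF nn inner outer])
    have E: "(\<lambda>(b, a). h (a, b)) = (\<lambda>i. \<mu> i * coupled_kernel P Pt \<Lambda> i (y, yt))"
      by (auto simp: h_def \<mu>_def)
    have H: "((\<lambda>i. \<mu> i * coupled_kernel P Pt \<Lambda> i (y, yt)) has_sum \<gamma> * \<mu>t yt * \<Lambda> yt y) (UNIV \<times> (- {dt}))"
      using A unfolding E .
    have "(\<Sum>\<^sub>\<infinity>i\<in>-(UNIV \<times> {dt}). \<mu> i * coupled_kernel P Pt \<Lambda> i (y, yt)) = \<gamma> * \<mu>t yt * \<Lambda> yt y"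
      unfolding compl by (rule infsumI[OF H])
    also have "\<dots> = \<gamma> * \<mu> (y, yt)" by (simp add: \<mu>_def)
    finally show ?thesis .
  qed
  show ?thesis
    unfolding qsd_def \<mu>_def[symmetric]
  proof (intro conjI allI ballI exI[of _ \<gamma>])
    show "0 \<le> \<mu> j" for j
      by (cases j) (simp add: \<mu>_def mun Ln)
    show "\<mu> j = 0" if "j \<in> UNIV \<times> {dt}" for j using that mud by (cases j) (simp add: \<mu>_def)
    show "(\<mu> has_sum 1) (- (UNIV \<times> {dt}))" by (rule part3)
    show "(\<Sum>\<^sub>\<infinity>i\<in>- (UNIV \<times> {dt}). \<mu> i * coupled_kernel P Pt \<Lambda> i j) = \<gamma> * \<mu> j"
      if "j \<in> - (UNIV \<times> {dt})" for j
    proof (cases j)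
      case (Pair a b)
      then have "b \<noteq> dt" using that by simp
      then show ?thesis using part4 Pair by simp
    qed
  qed
qed

end
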